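(* Let $k\ge1$ and let $G\in\mathfrak A$ be a graph containing no subgraph isomorphic to $\Gamma_{k+1}$. Then $G$ has the $\Gamma_k$-twin property.
   Context: $\mathfrak A$ is the class of maximal triangle-free graphs with at least two vertices containing no induced cycle of length six. (Maximal triangle-free: no triangle, and adding any new edge creates a triangle.) Andrásfai graph $\Gamma_k$: vertex set $\mathbb Z/(3k-1)\mathbb Z$, $ij$ an edge iff $i-j\in\{k,\dots,2k-1\}$ mod $3k-1$. For a subgraph $H$ of $G$, $q\in V(H)$, $q'\in V(G)$, $q'$ is an $H$-twin of $q$ if $\mathrm N(q)\cap V(H)=\mathrm N(q')\cap V(H)$ (neighbourhoods in $G$). For graphs $F,G$, $G$ has the $F$-twin property if for every $e\in E(F)$: whenever $H\subseteq G$ is isomorphic to $F$, $qz\in E(H)$ corresponds to $e$, and $q',z'$ are $H$-twins of $q,z$, then $q'z'\in E(G)$. *)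

theory Defs
  imports Main
begin

definition graph :: "'a set \<Rightarrow> ('a \<Rightarrow> 'a \<Rightarrow> bool) \<Rightarrow> bool" where
  "graph V E \<longleftrightarrow> finite V \<and> (\<forall>x y. E x y \<longrightarrow> x \<in> V \<and> y \<in> V)
     \<and> (\<forall>x y. E x y \<longrightarrow> E y x) \<and> (\<forall>x. \<not> E x x)"

definition triangle_free :: "'a set \<Rightarrow> ('a \<Rightarrow> 'a \<Rightarrow> bool) \<Rightarrow> bool" where
  "triangle_free V E \<longleftrightarrow>
     \<not> (\<exists>x\<in>V. \<exists>y\<in>V. \<exists>z\<in>V. E x y \<and> E y z \<and> E x z)"

definition add_edge :: "('a \<Rightarrow> 'a \<Rightarrow> bool) \<Rightarrow> 'a \<Rightarrow> 'a \<Rightarrow> ('a \<Rightarrow> 'a \<Rightarrow> bool)" where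
  "add_edge E x y = (\<lambda>a b. E a b \<or> (a = x \<and> b = y) \<or> (a = y \<and> b = x))"

definition maximal_triangle_free :: "'a set \<Rightarrow> ('a \<Rightarrow> 'a \<Rightarrow> bool) \<Rightarrow> bool" where
  "maximal_triangle_free V E \<longleftrightarrow> triangle_free V E \<and>
     (\<forall>x\<in>V. \<forall>y\<in>V. x \<noteq> y \<longrightarrow> \<not> E x y \<longrightarrow> \<not> triangle_free V (add_edge E x y))"

definition has_induced_C6 :: "'a set \<Rightarrow> ('a \<Rightarrow> 'a \<Rightarrow> bool) \<Rightarrow> bool" where
  "has_induced_C6 V E \<longleftrightarrow> (\<exists>f :: nat \<Rightarrow> 'a. inj_on f {0..<6} \<and> f ` {0..<6} \<subseteq> V \<and>
     (\<forall>i<6. \<forall>j<6. E (f i) (f j) \<longleftrightarrow> (i + 1) mod 6 = j \<or> (j + 1) mod 6 = i))"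

definition classA :: "'a set \<Rightarrow> ('a \<Rightarrow> 'a \<Rightarrow> bool) \<Rightarrow> bool" where
  "classA V E \<longleftrightarrow> graph V E \<and> card V \<ge> 2 \<and> maximal_triangle_free V E \<and> \<not> has_induced_C6 V E"

text \<open>Andrasfai graph \<open>\<Gamma>\<^sub>k\<close> on \<open>\<int>/(3k-1)\<close>, vertices represented by 0..3k-2.\<close>
definition andrasfai_V :: "nat \<Rightarrow> nat set" where
  "andrasfai_V k = {0..<3*k-1}"

definition andrasfai_E :: "nat \<Rightarrow> nat \<Rightarrow> nat \<Rightarrow> bool" where
  "andrasfai_E k i j \<longleftrightarrow> i \<in> andrasfai_V k \<and> j \<in> andrasfai_V k \<and>
     (int i - int j) mod int (3*k-1) \<in> {int k .. int (2*k-1)}"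

text \<open>An embedding of F into G, i.e. G has a (not necessarily induced) subgraph
  isomorphic to F, namely the image of the embedding.\<close>
definition embedding :: "'b set \<Rightarrow> ('b \<Rightarrow> 'b \<Rightarrow> bool) \<Rightarrow> 'a set \<Rightarrow> ('a \<Rightarrow> 'a \<Rightarrow> bool) \<Rightarrow> ('b \<Rightarrow> 'a) \<Rightarrow> bool" where
  "embedding VF EF VG EG \<phi> \<longleftrightarrow> inj_on \<phi> VF \<and> \<phi> ` VF \<subseteq> VG \<and>
     (\<forall>a\<in>VF. \<forall>b\<in>VF. EF a b \<longrightarrow> EG (\<phi> a) (\<phi> b))"

definition contains_subgraph :: "'a set \<Rightarrow> ('a \<Rightarrow> 'a \<Rightarrow> bool) \<Rightarrow> 'b set \<Rightarrow> ('b \<Rightarrow> 'b \<Rightarrow> bool) \<Rightarrow> bool" where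
  "contains_subgraph VG EG VF EF \<longleftrightarrow> (\<exists>\<phi>. embedding VF EF VG EG \<phi>)"

definition twin :: "('a \<Rightarrow> 'a \<Rightarrow> bool) \<Rightarrow> 'a set \<Rightarrow> 'a \<Rightarrow> 'a \<Rightarrow> bool" where
  "twin EG W q q' \<longleftrightarrow> {x. EG q x} \<inter> W = {x. EG q' x} \<inter> W"

definition twin_property :: "'b set \<Rightarrow> ('b \<Rightarrow> 'b \<Rightarrow> bool) \<Rightarrow> 'a set \<Rightarrow> ('a \<Rightarrow> 'a \<Rightarrow> bool) \<Rightarrow> bool" where
  "twin_property VF EF VG EG \<longleftrightarrow>
     (\<forall>a\<in>VF. \<forall>b\<in>VF. EF a b \<longrightarrow>
       (\<forall>\<phi>. embedding VF EF VG EG \<phi> \<longrightarrow>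
         (\<forall>q'\<in>VG. \<forall>z'\<in>VG. twin EG (\<phi> ` VF) (\<phi> a) q' \<longrightarrow> twin EG (\<phi> ` VF) (\<phi> b) z'
            \<longrightarrow> EG q' z')))"

end

theory Submission
  imports Defs
begin


lemma aE_iff: "andrasfai_E k i j \<longleftrightarrow> i + 1 < 3*k \<and> j + 1 < 3*k \<and>
   ((j + k \<le> i \<and> i < j + 2*k) \<or> (i + k \<le> j \<and> j < i + 2*k))"
proof (cases "i < 3*k-1 \<and> j < 3*k-1")
  case False then show ?thesis by (auto simp: andrasfai_E_def andrasfai_V_def)
next
  case True
  then have k1: "k \<ge> 1" by auto
  show ?thesis
  proof (cases "j \<le> i")
    case True
    have "(int i - int j) mod int (3*k-1) = int i - int j"
      using \<open>i < 3*k-1 \<and> j < 3*k-1\<close> True by (intro mod_pos_pos_trivial) auto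
    then show ?thesis using \<open>i < 3*k-1 \<and> j < 3*k-1\<close> True k1
      by (auto simp: andrasfai_E_def andrasfai_V_def)
  next
    case False
    have "(int i - int j) mod int (3*k-1) = int i - int j + int (3*k-1)"
    proof -
      have "(int i - int j) mod int (3*k-1) = (int i - int j + int (3*k-1)) mod int (3*k-1)" by simp
      also have "\<dots> = int i - int j + int (3*k-1)"
        using \<open>i < 3*k-1 \<and> j < 3*k-1\<close> False by (intro mod_pos_pos_trivial) auto
      finally show ?thesis .
    qed
    then show ?thesis using \<open>i < 3*k-1 \<and> j < 3*k-1\<close> False k1
      by (auto simp: andrasfai_E_def andrasfai_V_def)
  qed
qed

lemma aE_sym: "andrasfai_E k i j \<longleftrightarrow> andrasfai_E k j i"
  unfolding aE_iff by auto

lemma aE_lt: "andrasfai_E k i j \<Longrightarrow> i < 3*k-1 \<and> j < 3*k-1"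
  unfolding aE_iff by auto

lemma aE_common:
  assumes "i < 3*k-1" "j < 3*k-1" "i \<noteq> j" "\<not> andrasfai_E k i j"
  shows "\<exists>m. andrasfai_E k i m \<and> andrasfai_E k j m"
proof -
  have *: "\<exists>m. andrasfai_E k i m \<and> andrasfai_E k j m" if h: "i < j" "j + 1 < 3*k" "j < i + k \<or> i + 2*k \<le> j" for i j
  proof -
    consider "j < i + k" "j + k + 1 < 3*k" | "j < i + k" "j + k + 1 \<ge> 3*k" | "i + 2*k \<le> j" using h(3) by linarith
    then show ?thesis
    proof cases
      case 1 then show ?thesis using h by (intro exI[of _ "j+k"]) (simp add: aE_iff)
    next
      case 2 then show ?thesis using h apply (intro exI[of _ "j+k+1-3*k"]) apply (simp add: aE_iff) apply linarith done
    next
      case 3 then show ?thesis using h by (intro exI[of _ "i+k"]) (simp add: aE_iff)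
    qed
  qed
  have ne: "j < i + k \<or> i + 2*k \<le> j" if "i < j" "j + 1 < 3*k" "\<not> andrasfai_E k i j" for i j
    using that by (simp add: aE_iff) linarith
  show ?thesis
  proof (cases "i < j")
    case True then show ?thesis using * ne assms by (metis Suc_eq_plus1 Suc_lessI less_diff_conv)
  next
    case False then have "j < i" using assms by auto
    then show ?thesis using *[of j i] ne[of j i] assms aE_sym by (metis Suc_eq_plus1 Suc_lessI less_diff_conv)
  qed
qed

lemma mod_add_lt: assumes "(i::nat) < n" "c < n" shows "(i + c) mod n = (if i + c < n then i + c else i + c - n)"
proof (cases "i + c < n")
  case True then show ?thesis by simp
next
  case False
  then have "(i + c) mod n = (i + c - n) mod n" by (simp add: le_mod_geq)
  also have "\<dots> = i + c - n" using \<open>i < n\<close> \<open>c < n\<close> by (intro mod_less) linarith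
  finally show ?thesis using False by simp
qed

lemma aE_rot:
  assumes "c < 3*k-1" "i < 3*k-1" "j < 3*k-1"
  shows "andrasfai_E k ((i + c) mod (3*k-1)) ((j + c) mod (3*k-1)) \<longleftrightarrow> andrasfai_E k i j"
proof -
  have k: "k \<ge> 1" using assms by simp
  define n where "n = 3*k-1"
  have n: "n + 1 = 3 * k" using k by (simp add: n_def)
  have c: "c < n" "i < n" "j < n" using assms by (auto simp: n_def)
  have e: "andrasfai_E k x y \<longleftrightarrow> x < n \<and> y < n \<and> ((y + k \<le> x \<and> x < y + 2*k) \<or> (x + k \<le> y \<and> y < x + 2*k))" for x y
    unfolding aE_iff using n by auto
  have r: "(x + c) mod (3*k-1) = (if x+c<n then x+c else x+c-n)" if "x<n" for x
    using mod_add_lt[of x n c] that c by (simp add: n_def)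
  show ?thesis
  proof (cases "i + c < n"; cases "j + c < n")
    assume "i + c < n" "j + c < n" then show ?thesis unfolding r[OF c(2)] r[OF c(3)] e using c by simp
  next
    assume a: "\<not> i + c < n" "\<not> j + c < n" then show ?thesis unfolding r[OF c(2)] r[OF c(3)] e using c by simp linarith
  next
    assume a: "i + c < n" "\<not> j + c < n" then show ?thesis unfolding r[OF c(2)] r[OF c(3)] e using c n by simp linarith
  next
    assume a: "\<not> i + c < n" "j + c < n" then show ?thesis unfolding r[OF c(2)] r[OF c(3)] e using c n by simp linarith
  qed
qed

lemma rot_image:
  assumes "c < (n::nat)"
  shows "(\<lambda>i. (i + c) mod n) ` {0..<n} = {0..<n}"
proof
  show "(\<lambda>i. (i + c) mod n) ` {0..<n} \<subseteq> {0..<n}" using assms by auto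
  show "{0..<n} \<subseteq> (\<lambda>i. (i + c) mod n) ` {0..<n}"
  proof
    fix j assume j: "j \<in> {0..<n}"
    define i where "i = (if c \<le> j then j - c else j + n - c)"
    have "i < n" using j assms by (auto simp: i_def)
    moreover have "(i + c) mod n = j" using j assms \<open>i < n\<close> mod_add_lt[of i n c] by (auto simp: i_def)
    ultimately show "j \<in> (\<lambda>i. (i + c) mod n) ` {0..<n}" by force
  qed
qed

lemma rot_inj:
  assumes "c < (n::nat)" shows "inj_on (\<lambda>i. (i + c) mod n) {0..<n}"
proof (rule inj_onI)
  fix x y assume x: "x \<in> {0..<n}" and y: "y \<in> {0..<n}" and e: "(x + c) mod n = (y + c) mod n"
  have "(if x + c < n then x + c else x + c - n) = (if y + c < n then y + c else y + c - n)"
    using e mod_add_lt[of x n c] mod_add_lt[of y n c] x y assms by simp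
  then show "x = y" using x y assms by (simp split: if_splits)
qed

lemma rot_emb:
  assumes "embedding (andrasfai_V k) (andrasfai_E k) V E \<phi>" "c < 3*k-1"
  shows "embedding (andrasfai_V k) (andrasfai_E k) V E (\<lambda>i. \<phi> ((i + c) mod (3*k-1)))"
    and "(\<lambda>i. \<phi> ((i + c) mod (3*k-1))) ` andrasfai_V k = \<phi> ` andrasfai_V k"
proof -
  have im: "(\<lambda>i. (i + c) mod (3*k-1)) ` andrasfai_V k = andrasfai_V k"
    using rot_image[OF assms(2)] by (simp add: andrasfai_V_def)
  show "(\<lambda>i. \<phi> ((i + c) mod (3*k-1))) ` andrasfai_V k = \<phi> ` andrasfai_V k"
    using im by (metis image_image)
  show "embedding (andrasfai_V k) (andrasfai_E k) V E (\<lambda>i. \<phi> ((i + c) mod (3*k-1)))"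
    unfolding embedding_def
  proof (intro conjI ballI impI)
    have "inj_on \<phi> (andrasfai_V k)" using assms(1) by (simp add: embedding_def)
    moreover have "inj_on (\<lambda>i. (i + c) mod (3*k-1)) (andrasfai_V k)"
      using rot_inj[OF assms(2)] by (simp add: andrasfai_V_def)
    ultimately have "inj_on (\<phi> \<circ> (\<lambda>i. (i + c) mod (3*k-1))) (andrasfai_V k)"
      using im by (intro comp_inj_on) simp_all
    then show "inj_on (\<lambda>i. \<phi> ((i + c) mod (3*k-1))) (andrasfai_V k)" by (simp add: o_def)
  next
    show "(\<lambda>i. \<phi> ((i + c) mod (3*k-1))) ` andrasfai_V k \<subseteq> V"
      using assms(1) im by (auto simp: embedding_def image_image[symmetric])
  next
    fix a b assume "a \<in> andrasfai_V k" "b \<in> andrasfai_V k" "andrasfai_E k a b"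
    then have "andrasfai_E k ((a + c) mod (3*k-1)) ((b + c) mod (3*k-1))"
      using aE_rot[OF assms(2)] by (simp add: andrasfai_V_def)
    then show "E (\<phi> ((a + c) mod (3*k-1))) (\<phi> ((b + c) mod (3*k-1)))"
      using assms(1) aE_lt unfolding embedding_def andrasfai_V_def by auto
  qed
qed



lemma six: "(a::nat) < 6 \<Longrightarrow> a \<in> {0,1,2,3,4,5}"
  by (simp add: less_Suc_eq numeral_eq_Suc)

lemma all6: "(\<forall>a<(6::nat). P a) \<longleftrightarrow> P 0 \<and> P 1 \<and> P 2 \<and> P 3 \<and> P 4 \<and> P 5"
proof
  assume "P 0 \<and> P 1 \<and> P 2 \<and> P 3 \<and> P 4 \<and> P 5"
  then show "\<forall>a<(6::nat). P a" using six by blast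
qed simp

locale L =
  fixes V :: "'a set" and E :: "'a \<Rightarrow> 'a \<Rightarrow> bool" and k :: nat and \<phi> :: "nat \<Rightarrow> 'a"
  assumes k1: "1 \<le> k" and gr: "graph V E" and tf: "triangle_free V E"
    and emb: "embedding (andrasfai_V k) (andrasfai_E k) V E \<phi>"
begin

lemma Esym: "E x y \<Longrightarrow> E y x" using gr by (simp add: graph_def)
lemma Eirr: "\<not> E x x" using gr by (simp add: graph_def)
lemma EV: "E x y \<Longrightarrow> x \<in> V \<and> y \<in> V" using gr by (simp add: graph_def)
lemma notri: "E x y \<Longrightarrow> E y z \<Longrightarrow> E x z \<Longrightarrow> False"
  using tf EV unfolding triangle_free_def by blast

lemma phiV: "i < 3*k-1 \<Longrightarrow> \<phi> i \<in> V"
  using emb by (auto simp: embedding_def andrasfai_V_def)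
lemma phi_inj: "i < 3*k-1 \<Longrightarrow> j < 3*k-1 \<Longrightarrow> \<phi> i = \<phi> j \<Longrightarrow> i = j"
  using emb by (auto simp: embedding_def andrasfai_V_def inj_on_def)
lemma edge: "andrasfai_E k i j \<Longrightarrow> E (\<phi> i) (\<phi> j)"
  using emb aE_lt[of k i j] by (auto simp: embedding_def andrasfai_V_def)

lemma induced:
  assumes "i < 3*k-1" "j < 3*k-1"
  shows "E (\<phi> i) (\<phi> j) \<longleftrightarrow> andrasfai_E k i j"
proof
  assume e: "E (\<phi> i) (\<phi> j)"
  show "andrasfai_E k i j"
  proof (rule ccontr)
    assume n: "\<not> andrasfai_E k i j"
    have ij: "i \<noteq> j" using e Eirr by auto
    obtain m where "andrasfai_E k i m" "andrasfai_E k j m" using aE_common[OF assms ij n] by blast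
    then show False using e edge notri Esym by blast
  qed
qed (rule edge)

end

locale L2 = L +
  fixes q z d w
  assumes d_lt: "d < 3*k-1" and d_adj: "andrasfai_E k 0 d"
    and qV: "q \<in> V" and zV: "z \<in> V" and wV: "w \<in> V"
    and twq: "twin E (\<phi> ` andrasfai_V k) (\<phi> 0) q"
    and twz: "twin E (\<phi> ` andrasfai_V k) (\<phi> d) z"
    and qW: "q \<notin> \<phi> ` andrasfai_V k" and zW: "z \<notin> \<phi> ` andrasfai_V k"
    and nqz: "\<not> E q z" and qw: "E q w" and zw: "E z w"
    and noC6: "\<not> has_induced_C6 V E"
begin

lemma n0: "0 < 3*k-1" using k1 by simp

lemma q_adj: "i < 3*k-1 \<Longrightarrow> E q (\<phi> i) \<longleftrightarrow> andrasfai_E k 0 i"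
proof -
  assume i: "i < 3*k-1"
  have "\<phi> i \<in> \<phi> ` andrasfai_V k" using i by (simp add: andrasfai_V_def)
  then have "E q (\<phi> i) \<longleftrightarrow> E (\<phi> 0) (\<phi> i)" using twq unfolding twin_def by blast
  then show ?thesis using induced[OF n0 i] by simp
qed

lemma z_adj: "i < 3*k-1 \<Longrightarrow> E z (\<phi> i) \<longleftrightarrow> andrasfai_E k d i"
proof -
  assume i: "i < 3*k-1"
  have "\<phi> i \<in> \<phi> ` andrasfai_V k" using i by (simp add: andrasfai_V_def)
  then have "E z (\<phi> i) \<longleftrightarrow> E (\<phi> d) (\<phi> i)" using twz unfolding twin_def by blast
  then show ?thesis using induced[OF d_lt i] by simp
qed

lemma wW: "w \<notin> \<phi> ` andrasfai_V k"
proof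
  assume "w \<in> \<phi> ` andrasfai_V k"
  then obtain j where j: "j < 3*k-1" "w = \<phi> j" by (auto simp: andrasfai_V_def)
  have "andrasfai_E k 0 j" using q_adj[OF j(1)] qw j by simp
  moreover have "andrasfai_E k d j" using z_adj[OF j(1)] zw j by simp
  ultimately show False using d_adj edge notri by blast
qed

lemma qz: "q \<noteq> z"
proof
  assume e: "q = z"
  have "E q (\<phi> d)" using q_adj[OF d_lt] d_adj by simp
  moreover have "E q (\<phi> 0)" using z_adj[OF n0] d_adj aE_sym e by simp
  ultimately show False using edge[OF d_adj] notri Esym by blast
qed

lemma w_adj:
  assumes j: "j < 3*k-1" and u: "u < 3*k-1" and u': "u' < 3*k-1"
    and a1: "andrasfai_E k j u" and a2: "andrasfai_E k j u'" and a3: "andrasfai_E k 0 u"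
    and a4: "andrasfai_E k d u'" and a5: "\<not> andrasfai_E k 0 j" and a6: "\<not> andrasfai_E k d j"
    and a7: "\<not> andrasfai_E k 0 u'" and a8: "\<not> andrasfai_E k d u"
  shows "E w (\<phi> j)"
proof (rule ccontr)
  assume nw: "\<not> E w (\<phi> j)"
  define xs where "xs = [q, w, z, \<phi> u', \<phi> j, \<phi> u]"
  have nth: "xs ! 0 = q" "xs ! 1 = w" "xs ! 2 = z" "xs ! 3 = \<phi> u'" "xs ! 4 = \<phi> j" "xs ! 5 = \<phi> u"
    by (simp_all add: xs_def numeral_eq_Suc)
  have W: "\<phi> u' \<in> \<phi> ` andrasfai_V k" "\<phi> j \<in> \<phi> ` andrasfai_V k" "\<phi> u \<in> \<phi> ` andrasfai_V k"
    using j u u' by (auto simp: andrasfai_V_def)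
  have irr: "\<not> andrasfai_E k x x" for x by (simp add: aE_iff)
  have ne: "u' \<noteq> j" "j \<noteq> u" "u \<noteq> u'"
    using a1 a2 a3 a7 irr by auto
  have ne2: "\<phi> u' \<noteq> \<phi> j" "\<phi> j \<noteq> \<phi> u" "\<phi> u \<noteq> \<phi> u'"
    using ne phi_inj[OF u' j] phi_inj[OF j u] phi_inj[OF u u'] by auto
  have wq: "w \<noteq> q" "w \<noteq> z" using qw zw Eirr by auto
  have dist: "distinct xs"
    unfolding xs_def using ne2 wq qz W qW zW wW by auto
  have e1: "E q w" "E w z" "E z (\<phi> u')" "E (\<phi> u') (\<phi> j)" "E (\<phi> j) (\<phi> u)" "E (\<phi> u) q"
  proof -
    show "E q w" by (rule qw)
    show "E w z" using zw by (rule Esym)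
    show "E z (\<phi> u')" using z_adj[OF u'] a4 by simp
    show "E (\<phi> u') (\<phi> j)" using a2 aE_sym edge by blast
    show "E (\<phi> j) (\<phi> u)" using a1 by (rule edge)
    show "E (\<phi> u) q" using q_adj[OF u] a3 Esym by blast
  qed
  have e2: "\<not> E q z" "\<not> E q (\<phi> u')" "\<not> E q (\<phi> j)" "\<not> E w (\<phi> u')" "\<not> E w (\<phi> j)"
    "\<not> E w (\<phi> u)" "\<not> E z (\<phi> j)" "\<not> E z (\<phi> u)" "\<not> E (\<phi> u') (\<phi> u)"
    using nqz q_adj[OF u'] a7 q_adj[OF j] a5 nw z_adj[OF j] a6 z_adj[OF u] a8
    apply simp_all
    using notri[of w z "\<phi> u'"] zw e1 apply blast
    using notri[of w q "\<phi> u"] qw e1 Esym apply blast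
    using notri[of "\<phi> u'" "\<phi> j" "\<phi> u"] e1 by blast
  have "has_induced_C6 V E"
    unfolding has_induced_C6_def
  proof (intro exI[of _ "\<lambda>i. xs ! i"] conjI)
    show "inj_on (\<lambda>i. xs ! i) {0..<6}" by (rule inj_on_nth[OF dist]) (simp add: xs_def)
    show "(\<lambda>i. xs ! i) ` {0..<6} \<subseteq> V"
    proof
      fix x assume "x \<in> (\<lambda>i. xs ! i) ` {0..<6}"
      then obtain i where i6: "i < 6" "x = xs ! i" by auto
      then have "i \<in> {0,1,2,3,4,5}" using six by blast
      then show "x \<in> V" using i6 qV zV wV phiV[OF j] phiV[OF u] phiV[OF u'] nth
        by (elim insertE emptyE) auto
    qed
    show "\<forall>a<6. \<forall>b<6. E (xs ! a) (xs ! b) = ((a + 1) mod 6 = b \<or> (b + 1) mod 6 = a)"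
    proof -
      have f1: "E w q" "E z w" "E (\<phi> u') z" "E (\<phi> j) (\<phi> u')" "E (\<phi> u) (\<phi> j)" "E q (\<phi> u)"
        using e1 Esym by blast+
      have f2: "\<not> E z q" "\<not> E (\<phi> u') q" "\<not> E (\<phi> j) q" "\<not> E (\<phi> u') w" "\<not> E (\<phi> j) w"
        "\<not> E (\<phi> u) w" "\<not> E (\<phi> j) z" "\<not> E (\<phi> u) z" "\<not> E (\<phi> u) (\<phi> u')"
        using e2 Esym by blast+
      show ?thesis unfolding all6 by (simp only: nth e1 e2 f1 f2 Eirr) simp
    qed
  qed
  then show False using noC6 by simp
qed

lemma mid:
  assumes "k + 1 \<le> d" "d + 2 \<le> 2*k"
  shows False
proof -
  define m where "m = k - 3"
  have m: "k = m + 3" using assms unfolding m_def by linarith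
  have dl: "d < 3*m+8" using d_lt m by simp
  have h1: "E w (\<phi> (m+2))"
    apply (rule w_adj[of "m+2" "2*m+5" "3*m+7"]) using assms dl m by (simp_all add: aE_iff)
  have h2: "E w (\<phi> (2*m+6))"
    apply (rule w_adj[of "2*m+6" "m+3" 1]) using assms dl m by (simp_all add: aE_iff)
  have "andrasfai_E k (m+2) (2*m+6)" unfolding aE_iff using m by simp
  then show False using h1 h2 edge notri by blast
qed

lemma wj:
  assumes "2*k \<le> j" "j < 3*k-1" "d = 2*k-1"
  shows "E w (\<phi> j)"
proof -
  define m where "m = k - 1"
  define t where "t = j - 2*k"
  have m: "k = m + 1" "j = 2*k + t" using k1 assms unfolding m_def t_def by linarith+
  have t: "t + 1 < k" using assms m by simp
  show ?thesis
    apply (rule w_adj[of j "k+t" "t+1"]) using assms m t by (simp_all add: aE_iff)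
qed

end

lemma maximal_common:
  assumes "graph V E" "maximal_triangle_free V E" "x \<in> V" "y \<in> V" "x \<noteq> y" "\<not> E x y"
  shows "\<exists>w\<in>V. E x w \<and> E y w"
proof -
  have tf: "triangle_free V E" and nt: "\<not> triangle_free V (add_edge E x y)"
    using assms unfolding maximal_triangle_free_def by auto
  have sym: "\<And>a b. E a b \<Longrightarrow> E b a" and irr: "\<And>a. \<not> E a a"
    using assms(1) by (auto simp: graph_def)
  from nt obtain a b c where abc: "a \<in> V" "b \<in> V" "c \<in> V"
    "add_edge E x y a b" "add_edge E x y b c" "add_edge E x y a c"
    unfolding triangle_free_def by blast
  show ?thesis
    using abc tf assms(5) irr sym unfolding add_edge_def triangle_free_def by metis
qed



definition oo :: "nat \<Rightarrow> nat \<Rightarrow> nat" where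
  "oo k p = (if p < k then p else if p \<le> 2*k then p - 1 else p - 2)"

definition Ol :: "nat \<Rightarrow> nat \<Rightarrow> bool" where
  "Ol k p \<longleftrightarrow> p < 3*k+2 \<and> p \<noteq> k \<and> p \<noteq> 2*k+1 \<and> p \<noteq> 3*k+1"

lemma o_lt: "Ol k p \<Longrightarrow> oo k p < 3*k-1"
  unfolding Ol_def oo_def by auto

lemma o_inj: "Ol k p \<Longrightarrow> Ol k p' \<Longrightarrow> oo k p = oo k p' \<Longrightarrow> p = p'"
  unfolding Ol_def oo_def by (auto split: if_splits)

lemma o_adj: assumes "Ol k p" "Ol k p'" "andrasfai_E (k+1) p p'"
  shows "andrasfai_E k (oo k p) (oo k p')"
  using assms unfolding Ol_def oo_def aE_iff by (auto split: if_splits)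

lemma new_k: "andrasfai_E (k+1) k p \<Longrightarrow> Ol k p \<Longrightarrow> 2*k \<le> oo k p"
  unfolding Ol_def oo_def aE_iff by auto

lemma new_z: "1 \<le> k \<Longrightarrow> andrasfai_E (k+1) (2*k+1) p \<Longrightarrow> Ol k p \<Longrightarrow> andrasfai_E k (2*k-1) (oo k p)"
  unfolding Ol_def oo_def aE_iff by auto

lemma new_q: "andrasfai_E (k+1) (3*k+1) p \<Longrightarrow> Ol k p \<Longrightarrow> andrasfai_E k 0 (oo k p)"
  unfolding Ol_def oo_def aE_iff by auto

lemma new_facts: "andrasfai_E (k+1) k (2*k+1)" "andrasfai_E (k+1) k (3*k+1)"
  "\<not> andrasfai_E (k+1) (2*k+1) (3*k+1)" "\<not> andrasfai_E (k+1) x x"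
  unfolding aE_iff by auto


context L2 begin

lemma gamma:
  assumes d2: "d = 2*k-1"
  shows "contains_subgraph V E (andrasfai_V (k+1)) (andrasfai_E (k+1))"
proof -
  define \<psi> where "\<psi> p = (if p = k then w else if p = 2*k+1 then z else if p = 3*k+1 then q else \<phi> (oo k p))" for p
  have VV: "andrasfai_V (k+1) = {0..<3*k+2}" by (simp add: andrasfai_V_def)
  have cs: "p = k \<or> p = 2*k+1 \<or> p = 3*k+1 \<or> Ol k p" if "p < 3*k+2" for p
    using that unfolding Ol_def by auto
  have ps: "\<psi> k = w" "\<psi> (2*k+1) = z" "\<psi> (3*k+1) = q" using k1 by (simp_all add: \<psi>_def)
  have po: "\<psi> p = \<phi> (oo k p)" if "Ol k p" for p using that unfolding Ol_def \<psi>_def by auto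
  have Wm: "\<phi> (oo k p) \<in> \<phi> ` andrasfai_V k" if "Ol k p" for p
    using o_lt[OF that] by (simp add: andrasfai_V_def)
  have wq: "w \<noteq> q" "w \<noteq> z" using qw zw Eirr by auto
  have side: "E (\<psi> p) (\<psi> p')" if p: "p = k \<or> p = 2*k+1 \<or> p = 3*k+1" and p': "p' < 3*k+2"
    and a: "andrasfai_E (k+1) p p'" for p p'
  proof -
    have nf: "andrasfai_E (k+1) k (2*k+1)" "andrasfai_E (k+1) k (3*k+1)"
      "\<not> andrasfai_E (k+1) (2*k+1) (3*k+1)" "\<not> andrasfai_E (k+1) x x" for x
      using new_facts by auto
    consider "p' = k \<or> p' = 2*k+1 \<or> p' = 3*k+1" | "Ol k p'" using cs[OF p'] by blast
    then show ?thesis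
    proof cases
      case 1
      then show ?thesis using p a nf aE_sym[of "k+1"] ps qw zw Esym by auto
    next
      case 2
      note o = o_lt[OF 2]
      from p show ?thesis
      proof (elim disjE)
        assume "p = k"
        then show ?thesis using wj[OF new_k[OF _ 2] o d2] a ps po[OF 2] by simp
      next
        assume pe: "p = 2*k+1"
        then have "andrasfai_E k d (oo k p')" using new_z[OF k1 _ 2] a d2 by simp
        then show ?thesis using z_adj[OF o] pe ps po[OF 2] by simp
      next
        assume pe: "p = 3*k+1"
        then have "andrasfai_E k 0 (oo k p')" using new_q[OF _ 2] a by simp
        then show ?thesis using q_adj[OF o] pe ps po[OF 2] by simp
      qed
    qed
  qed
  have "embedding (andrasfai_V (k+1)) (andrasfai_E (k+1)) V E \<psi>"
    unfolding embedding_def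
  proof (intro conjI ballI impI)
    show "inj_on \<psi> (andrasfai_V (k+1))"
    proof (rule inj_onI)
      fix p p' assume "p \<in> andrasfai_V (k+1)" "p' \<in> andrasfai_V (k+1)" and e: "\<psi> p = \<psi> p'"
      then have "p < 3*k+2" "p' < 3*k+2" by (auto simp: andrasfai_V_def)
      then consider "p = k \<or> p = 2*k+1 \<or> p = 3*k+1" "p' = k \<or> p' = 2*k+1 \<or> p' = 3*k+1"
        | "p = k \<or> p = 2*k+1 \<or> p = 3*k+1" "Ol k p'"
        | "Ol k p" "p' = k \<or> p' = 2*k+1 \<or> p' = 3*k+1"
        | "Ol k p" "Ol k p'" using cs by blast
      then show "p = p'"
      proof cases
        case 1 then show ?thesis using e ps wq qz by auto
      next
        case 2
        have "\<psi> p \<in> {w, z, q}" using 2(1) ps by auto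
        moreover have "\<psi> p' \<in> \<phi> ` andrasfai_V k" using po[OF 2(2)] Wm[OF 2(2)] by simp
        ultimately show ?thesis using e qW zW wW by auto
      next
        case 3
        have "\<psi> p' \<in> {w, z, q}" using 3(2) ps by auto
        moreover have "\<psi> p \<in> \<phi> ` andrasfai_V k" using po[OF 3(1)] Wm[OF 3(1)] by simp
        ultimately show ?thesis using e qW zW wW by auto
      next
        case 4
        then have "oo k p = oo k p'" using e po phi_inj o_lt by metis
        then show ?thesis using o_inj 4 by blast
      qed
    qed
  next
    show "\<psi> ` andrasfai_V (k+1) \<subseteq> V"
    proof
      fix x assume "x \<in> \<psi> ` andrasfai_V (k+1)"
      then obtain p where p: "p < 3*k+2" "x = \<psi> p" by (auto simp: andrasfai_V_def)
      show "x \<in> V"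
      proof (cases "Ol k p")
        case True then show ?thesis using p po phiV o_lt by simp
      next
        case False then show ?thesis using cs[OF p(1)] p ps qV zV wV by auto
      qed
    qed
  next
    fix p p' assume pV: "p \<in> andrasfai_V (k+1)" "p' \<in> andrasfai_V (k+1)" and a: "andrasfai_E (k+1) p p'"
    then have pl: "p < 3*k+2" "p' < 3*k+2" by (auto simp: andrasfai_V_def)
    show "E (\<psi> p) (\<psi> p')"
    proof (cases "p = k \<or> p = 2*k+1 \<or> p = 3*k+1")
      case True then show ?thesis using side pl a by blast
    next
      case False
      then have op: "Ol k p" using cs pl by blast
      show ?thesis
      proof (cases "p' = k \<or> p' = 2*k+1 \<or> p' = 3*k+1")
        case True
        then show ?thesis using side[OF True pl(1)] a aE_sym Esym by blast
      next
        case False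
        then have op': "Ol k p'" using cs pl by blast
        show ?thesis using o_adj[OF op op' a] edge po[OF op] po[OF op'] by simp
      qed
    qed
  qed
  then show ?thesis unfolding contains_subgraph_def by blast
qed

end


locale L1 = L +
  assumes mtf: "maximal_triangle_free V E" and noC6': "\<not> has_induced_C6 V E"
    and noG: "\<not> contains_subgraph V E (andrasfai_V (k+1)) (andrasfai_E (k+1))"
begin

lemma core:
  assumes dl: "d < 3*k-1" and da: "andrasfai_E k 0 d" and qV: "q \<in> V" and zV: "z \<in> V"
    and twq: "twin E (\<phi> ` andrasfai_V k) (\<phi> 0) q"
    and twz: "twin E (\<phi> ` andrasfai_V k) (\<phi> d) z"
  shows "E q z"
proof -
  let ?W = "\<phi> ` andrasfai_V k"
  have n0: "0 < 3*k-1" using k1 by simp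
  have W0: "\<phi> 0 \<in> ?W" and Wd: "\<phi> d \<in> ?W" using n0 dl by (auto simp: andrasfai_V_def)
  have e0d: "E (\<phi> 0) (\<phi> d)" using edge[OF da] .
  have Nq: "E q x \<longleftrightarrow> E (\<phi> 0) x" if "x \<in> ?W" for x using twq that unfolding twin_def by blast
  have Nz: "E z x \<longleftrightarrow> E (\<phi> d) x" if "x \<in> ?W" for x using twz that unfolding twin_def by blast
  show ?thesis
  proof (cases "q \<in> ?W")
    case True
    have "E q (\<phi> d)" using Nq[OF Wd] e0d by simp
    then have "E (\<phi> d) q" by (rule Esym)
    then have "E z q" using Nz[OF True] by simp
    then show ?thesis by (rule Esym)
  next
    case qn: False
    show ?thesis
    proof (cases "z \<in> ?W")
      case True
      have "E z (\<phi> 0)" using Nz[OF W0] e0d Esym by blast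
      then have "E (\<phi> 0) z" by (rule Esym)
      then show "E q z" using Nq[OF True] by simp
    next
      case zn: False
      show ?thesis
      proof (rule ccontr)
        assume nqz: "\<not> E q z"
        have "q \<noteq> z"
        proof
          assume qz: "q = z"
          have "E q (\<phi> d)" using Nq[OF Wd] e0d by simp
          moreover have "E q (\<phi> 0)" using Nz[OF W0] e0d Esym qz by blast
          ultimately show False using e0d notri Esym by blast
        qed
        then obtain w where w: "w \<in> V" "E q w" "E z w"
          using maximal_common[OF gr mtf qV zV _ nqz] by blast
        interpret I: L2 V E k \<phi> q z d w
          by unfold_locales (use dl da qV zV w twq twz qn zn nqz noC6' in auto)
        have dr: "k \<le> d" "d + 1 \<le> 2*k" using da unfolding aE_iff by auto
        consider "d = 2*k-1" | "k + 1 \<le> d" "d + 2 \<le> 2*k" | "d = k" "d \<noteq> 2*k-1" using dr by linarith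
        then show False
        proof cases
          case 1 then show False using I.gamma noG by blast
        next
          case 2 then show False using I.mid by blast
        next
          case 3
          let ?\<phi> = "\<lambda>i. \<phi> ((i + k) mod (3*k-1))"
          have kl: "k < 3*k-1" using 3 dr by linarith
          have re: "embedding (andrasfai_V k) (andrasfai_E k) V E ?\<phi>" "?\<phi> ` andrasfai_V k = ?W"
            using rot_emb[OF emb kl] by auto
          have r0: "?\<phi> 0 = \<phi> d" using kl 3 by simp
          have r1: "?\<phi> (2*k-1) = \<phi> 0"
          proof -
            have "(2*k-1 + k) = 3*k-1" using k1 by simp
            then show ?thesis by simp
          qed
          have a2: "andrasfai_E k 0 (2*k-1)" "2*k-1 < 3*k-1" using 3 dr unfolding aE_iff by auto
          interpret J: L2 V E k ?\<phi> z q "2*k-1" w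
          proof unfold_locales
            show "embedding (andrasfai_V k) (andrasfai_E k) V E ?\<phi>" by (rule re(1))
          qed (use a2 qV zV w twq twz qn zn nqz noC6' re(2) r0 r1 Esym gr tf in auto)
          show False using J.gamma noG by simp
        qed
      qed
    qed
  qed
qed

end

theorem lemma3p3:
  fixes V :: "'a set" and E :: "'a \<Rightarrow> 'a \<Rightarrow> bool" and k :: nat
  assumes "k \<ge> 1"
    and "classA V E"
    and "\<not> contains_subgraph V E (andrasfai_V (k+1)) (andrasfai_E (k+1))"
  shows "twin_property (andrasfai_V k) (andrasfai_E k) V E"
  unfolding twin_property_def
proof (intro ballI impI allI)
  fix a b \<phi> q z
  assume aV: "a \<in> andrasfai_V k" and bV: "b \<in> andrasfai_V k" and ab: "andrasfai_E k a b"
    and emb: "embedding (andrasfai_V k) (andrasfai_E k) V E \<phi>"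
    and qV: "q \<in> V" and zV: "z \<in> V"
    and twq: "twin E (\<phi> ` andrasfai_V k) (\<phi> a) q" and twz: "twin E (\<phi> ` andrasfai_V k) (\<phi> b) z"
  have gr: "graph V E" and mtf: "maximal_triangle_free V E" and nc: "\<not> has_induced_C6 V E"
    using assms(2) by (auto simp: classA_def)
  have tf: "triangle_free V E" using mtf by (simp add: maximal_triangle_free_def)
  have al: "a < 3*k-1" and bl: "b < 3*k-1" using aV bV by (auto simp: andrasfai_V_def)
  let ?\<phi> = "\<lambda>i. \<phi> ((i + a) mod (3*k-1))"
  have re: "embedding (andrasfai_V k) (andrasfai_E k) V E ?\<phi>" "?\<phi> ` andrasfai_V k = \<phi> ` andrasfai_V k"
    using rot_emb[OF emb al] by auto
  interpret L1 V E k ?\<phi>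
    by unfold_locales (use assms(1,3) gr tf re(1) mtf nc in auto)
  define d where "d = (if a \<le> b then b - a else b + (3*k-1) - a)"
  have dl: "d < 3*k-1" using al bl by (auto simp: d_def)
  have r0: "?\<phi> 0 = \<phi> a" using al by simp
  have rd: "(d + a) mod (3*k-1) = b"
  proof (cases "a \<le> b")
    case True then show ?thesis using bl by (simp add: d_def)
  next
    case False
    then have "d + a = b + (3*k-1)" using al by (simp add: d_def)
    then show ?thesis using bl by (metis mod_add_self2 mod_less)
  qed
  have "andrasfai_E k ((0 + a) mod (3*k-1)) ((d + a) mod (3*k-1)) \<longleftrightarrow> andrasfai_E k 0 d"
  proof -
    have n0: "0 < 3*k-1" using al by simp
    show ?thesis using aE_rot[OF al n0 dl] by simp
  qed
  then have da: "andrasfai_E k 0 d" using ab rd al by simp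
  show "E q z"
    using core[OF dl da qV zV] twq twz re(2) r0 rd by simp
qed

end
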